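(* Let $\Omega$, $B$, $B^+$, $Z$, $B_Z$, $\mathcal{P}_Z$ and $G$ be as in the context, and let $\alpha:\mathcal{P}_Z\to\mathbb{R}_+\cup\{+\infty\}$ satisfy (A1) $\inf_{\mathbb{P}\in\mathcal{P}_Z}\alpha(\mathbb{P})=0$, and (A2) $\alpha(\mathbb{P})\ge\mathbb{E}^{\mathbb{P}}\beta(Z)$ for all $\mathbb{P}\in\mathcal{P}_Z$, where $\beta:[1,\infty)\to\mathbb{R}$ is an increasing function (i.e. $\beta(x)\ge\beta(y)$ for $x\ge y$) with $\lim_{x\to\infty}\beta(x)/x=+\infty$. Let $A=\{X\in B_Z:\mathbb{E}^{\mathbb{P}}X+\alpha(\mathbb{P})\ge0\text{ for all }\mathbb{P}\in\mathcal{P}_Z\}+B^+$. Then for every $n\in\mathbb{N}$ there exists $z\in\mathbb{R}_+$ such that $n(Z-z)^+-\frac1n\in G-A$.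
   Context: Fix integers $J\ge0$, $T\ge1$. $\Omega$ is a non-empty subset of $((0,\infty)\times\mathbb{R}^J)^T$, endowed with the Euclidean metric. $B$ is the space of all Borel measurable functions $X:\Omega\to\mathbb{R}$ and $B^+=\{X\in B:X\ge0\}$. $Z:\Omega\to[1,\infty)$ is a continuous function such that $\{\omega\in\Omega:Z(\omega)\le z\}$ is compact for every $z\in\mathbb{R}_+$. $B_Z$ is the set of $X\in B$ with $X/Z$ bounded, and $\mathcal{P}_Z$ the set of Borel probability measures $\mathbb{P}$ on $\Omega$ with $\mathbb{E}^{\mathbb{P}}Z<\infty$. $G\subseteq B$ is a set with $0\in G$. $G-A=\{g-a:g\in G,a\in A\}$; sums of sets are Minkowski sums. The convention $x+(+\infty)=+\infty$ is used. *)

theory Defs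
  imports "HOL-Probability.Probability"
begin

text \<open>Points of Omega are elements of ((0,inf) x R^J)^T, modelled as (real^'k)^'t with
  CARD('k) = J+1 and a distinguished coordinate k0 (the (0,inf)-component), CARD('t) = T.\<close>

definition BB :: "('a::topological_space) set \<Rightarrow> ('a \<Rightarrow> real) set" where
  "BB \<Omega> = {X. X \<in> borel_measurable (restrict_space borel \<Omega>)}"

definition BBplus :: "('a::topological_space) set \<Rightarrow> ('a \<Rightarrow> real) set" where
  "BBplus \<Omega> = {X \<in> BB \<Omega>. \<forall>\<omega>\<in>\<Omega>. X \<omega> \<ge> 0}"

definition BB_Z :: "('a::topological_space) set \<Rightarrow> ('a \<Rightarrow> real) \<Rightarrow> ('a \<Rightarrow> real) set" where
  "BB_Z \<Omega> Z = {X \<in> BB \<Omega>. \<exists>c. \<forall>\<omega>\<in>\<Omega>. \<bar>X \<omega> / Z \<omega>\<bar> \<le> c}"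

definition PP_Z :: "('a::topological_space) set \<Rightarrow> ('a \<Rightarrow> real) \<Rightarrow> 'a measure set" where
  "PP_Z \<Omega> Z = {P. sets P = sets (restrict_space borel \<Omega>) \<and> prob_space P \<and>
                    (\<integral>\<^sup>+\<omega>. ennreal (Z \<omega>) \<partial>P) < \<infinity>}"

definition eexp :: "'a measure \<Rightarrow> ('a \<Rightarrow> real) \<Rightarrow> ereal" where
  "eexp P f = enn2ereal (\<integral>\<^sup>+\<omega>. ennreal (f \<omega>) \<partial>P) - enn2ereal (\<integral>\<^sup>+\<omega>. ennreal (- f \<omega>) \<partial>P)"

definition A0 :: "('a::topological_space) set \<Rightarrow> ('a \<Rightarrow> real) \<Rightarrow> ('a measure \<Rightarrow> ereal) \<Rightarrow> ('a \<Rightarrow> real) set" where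
  "A0 \<Omega> Z \<alpha> = {X \<in> BB_Z \<Omega> Z. \<forall>P\<in>PP_Z \<Omega> Z. ereal (integral\<^sup>L P X) + \<alpha> P \<ge> 0}"

definition in_G_minus_A :: "('a::topological_space) set \<Rightarrow> ('a \<Rightarrow> real) \<Rightarrow> ('a measure \<Rightarrow> ereal)
     \<Rightarrow> ('a \<Rightarrow> real) set \<Rightarrow> ('a \<Rightarrow> real) \<Rightarrow> bool" where
  "in_G_minus_A \<Omega> Z \<alpha> G f \<longleftrightarrow>
     (\<exists>g\<in>G. \<exists>Y\<in>A0 \<Omega> Z \<alpha>. \<exists>W\<in>BBplus \<Omega>. \<forall>\<omega>\<in>\<Omega>. f \<omega> = g \<omega> - (Y \<omega> + W \<omega>))"

end

theory Submission
  imports Defs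
begin

theorem proposition2p2:
  fixes \<Omega> :: "((real^'k)^'t) set"
    and k0 :: 'k
    and Z :: "(real^'k)^'t \<Rightarrow> real"
    and G :: "((real^'k)^'t \<Rightarrow> real) set"
    and \<alpha> :: "((real^'k)^'t) measure \<Rightarrow> ereal"
    and \<beta> :: "real \<Rightarrow> real"
  assumes Omega_ne: "\<Omega> \<noteq> {}"
    and Omega_sub: "\<forall>\<omega>\<in>\<Omega>. \<forall>t. \<omega> $ t $ k0 > 0"
    and Z_cont: "continuous_on \<Omega> Z"
    and Z_ge1: "\<forall>\<omega>\<in>\<Omega>. Z \<omega> \<ge> 1"
    and Z_compact: "\<forall>z\<ge>0. compact {\<omega>\<in>\<Omega>. Z \<omega> \<le> z}"
    and G_sub: "G \<subseteq> BB \<Omega>"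
    and G_zero: "\<exists>g\<in>G. \<forall>\<omega>\<in>\<Omega>. g \<omega> = 0"
    and alpha_nonneg: "\<forall>P\<in>PP_Z \<Omega> Z. \<alpha> P \<ge> 0"
    and A1: "(INF P\<in>PP_Z \<Omega> Z. \<alpha> P) = 0"
    and beta_mono: "mono_on {1..} \<beta>"
    and beta_lim: "filterlim (\<lambda>x. \<beta> x / x) at_top at_top"
    and A2: "\<forall>P\<in>PP_Z \<Omega> Z. \<alpha> P \<ge> eexp P (\<lambda>\<omega>. \<beta> (Z \<omega>))"
  shows "\<forall>n::nat. n \<ge> 1 \<longrightarrow> (\<exists>z::real. z \<ge> 0 \<and>
           in_G_minus_A \<Omega> Z \<alpha> G (\<lambda>\<omega>. real n * max 0 (Z \<omega> - z) - 1 / real n))"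
proof (intro allI impI)
  fix n :: nat assume n1: "n \<ge> 1"
  define b where "b = \<beta> 1"
  define c where "c = \<bar>b\<bar>"
  define K where "K = real n + c * (real n)^2 + 1"
  have Kpos: "K \<ge> 0" unfolding K_def c_def by simp
  have ZM: "Z \<in> borel_measurable (restrict_space borel \<Omega>)"
    using Z_cont borel_measurable_continuous_on_restrict by blast
  have "\<forall>\<^sub>F x in at_top. \<beta> x / x \<ge> K"
    using beta_lim by (simp add: filterlim_at_top)
  then obtain N where N: "\<And>x. x \<ge> N \<Longrightarrow> \<beta> x / x \<ge> K"
    by (auto simp: eventually_at_top_linorder)
  define z where "z = max N 1"
  have z1: "z \<ge> 1" unfolding z_def by simp
  have bz: "\<beta> x \<ge> K * x" if "x \<ge> z" for x
  proof -
    have "x > 0" "x \<ge> N" using that z1 unfolding z_def by auto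
    with N[of x] show ?thesis by (simp add: field_simps)
  qed
  have bge: "\<beta> (Z \<omega>) \<ge> - c" if "\<omega> \<in> \<Omega>" for \<omega>
  proof -
    have "\<beta> 1 \<le> \<beta> (Z \<omega>)" using beta_mono Z_ge1 that by (auto intro: mono_onD)
    thus ?thesis unfolding c_def b_def by linarith
  qed
  have bpos: "ennreal (K * max 0 (Z \<omega> - z)) \<le> ennreal (\<beta> (Z \<omega>))" if "\<omega> \<in> \<Omega>" for \<omega>
  proof (cases "Z \<omega> \<ge> z")
    case True
    have "K * max 0 (Z \<omega> - z) \<le> K * Z \<omega>" using True z1 Kpos
      by (intro mult_left_mono) auto
    also have "\<dots> \<le> \<beta> (Z \<omega>)" using bz True by blast
    finally show ?thesis by (rule ennreal_leI)
  next
    case False then show ?thesis by simp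
  qed
  define Y where "Y = (\<lambda>\<omega>. 1 / real n - real n * max 0 (Z \<omega> - z))"
  have YM: "Y \<in> borel_measurable (restrict_space borel \<Omega>)"
    unfolding Y_def using ZM by measurable
  have YA: "Y \<in> A0 \<Omega> Z \<alpha>"
    unfolding A0_def
  proof (intro CollectI conjI ballI)
    show "Y \<in> BB_Z \<Omega> Z"
      unfolding BB_Z_def BB_def
    proof (intro CollectI conjI exI ballI)
      show "Y \<in> borel_measurable (restrict_space borel \<Omega>)" by (rule YM)
      fix \<omega> assume w: "\<omega> \<in> \<Omega>"
      have Z1: "Z \<omega> \<ge> 1" using Z_ge1 w by blast
      have "\<bar>Y \<omega>\<bar> \<le> 1 / real n + real n * Z \<omega>"
      proof -
        have m: "0 \<le> max 0 (Z \<omega> - z)" "max 0 (Z \<omega> - z) \<le> Z \<omega>" using Z1 z1 by auto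
        have np: "real n \<ge> 0" by simp
        have "real n * max 0 (Z \<omega> - z) \<le> real n * Z \<omega>" using m np by (intro mult_left_mono) auto
        moreover have "real n * max 0 (Z \<omega> - z) \<ge> 0" using m np by simp
        moreover have "1 / real n \<ge> 0" by simp
        ultimately show ?thesis unfolding Y_def abs_le_iff by linarith
      qed
      also have "\<dots> \<le> (1 / real n + real n) * Z \<omega>"
        using Z1 by (simp add: algebra_simps divide_right_mono)
      finally show "\<bar>Y \<omega> / Z \<omega>\<bar> \<le> 1 / real n + real n"
        using Z1 by (simp add: abs_div pos_divide_le_eq)
    qed
    fix P assume P: "P \<in> PP_Z \<Omega> Z"
    have sP: "sets P = sets (restrict_space borel \<Omega>)" and ps: "prob_space P"
      and fin: "(\<integral>\<^sup>+\<omega>. ennreal (Z \<omega>) \<partial>P) < \<infinity>" using P unfolding PP_Z_def by auto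
    have spP: "space P = \<Omega>" using sets_eq_imp_space_eq[OF sP] by (simp add: space_restrict_space)
    have mP: "measurable P borel = measurable (restrict_space borel \<Omega>) borel"
      by (rule measurable_cong_sets[OF sP refl])
    define h where "h = (\<lambda>\<omega>. max 0 (Z \<omega> - z))"
    have hM: "h \<in> borel_measurable P" unfolding mP h_def using ZM by measurable
    have "(\<integral>\<^sup>+\<omega>. ennreal (norm (h \<omega>)) \<partial>P) \<le> (\<integral>\<^sup>+\<omega>. ennreal (Z \<omega>) \<partial>P)"
      by (intro nn_integral_mono ennreal_leI) (use z1 spP Z_ge1 in \<open>force simp: h_def\<close>)
    with fin have hI: "integrable P h" using hM integrable_iff_bounded by fastforce
    define e where "e = integral\<^sup>L P h"
    have e0: "e \<ge> 0" unfolding e_def by (rule integral_nonneg_AE) (auto simp: h_def)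
    have KhI: "integrable P (\<lambda>\<omega>. K * h \<omega>)" using hI by simp
    have pos1: "ennreal (K * e) \<le> (\<integral>\<^sup>+\<omega>. ennreal (\<beta> (Z \<omega>)) \<partial>P)"
    proof -
      have "ennreal (K * e) = (\<integral>\<^sup>+\<omega>. ennreal (K * h \<omega>) \<partial>P)"
        using nn_integral_eq_integral[OF KhI] Kpos unfolding e_def
        by (simp add: h_def)
      also have "\<dots> \<le> (\<integral>\<^sup>+\<omega>. ennreal (\<beta> (Z \<omega>)) \<partial>P)"
        by (intro nn_integral_mono) (use bpos spP in \<open>auto simp: h_def\<close>)
      finally show ?thesis .
    qed
    have neg1: "(\<integral>\<^sup>+\<omega>. ennreal (- \<beta> (Z \<omega>)) \<partial>P) \<le> ennreal c"
    proof -
      have "(\<integral>\<^sup>+\<omega>. ennreal (- \<beta> (Z \<omega>)) \<partial>P) \<le> (\<integral>\<^sup>+\<omega>. ennreal c \<partial>P)"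
        by (intro nn_integral_mono ennreal_leI) (use bge spP in \<open>force\<close>)
      also have "\<dots> = ennreal c" using prob_space.emeasure_space_1[OF ps] by simp
      finally show ?thesis .
    qed
    have ee: "eexp P (\<lambda>\<omega>. \<beta> (Z \<omega>)) \<ge> ereal (K * e) - ereal c"
    proof -
      have a: "enn2ereal (ennreal (K * e)) \<le> enn2ereal (\<integral>\<^sup>+\<omega>. ennreal (\<beta> (Z \<omega>)) \<partial>P)"
        using pos1 by (simp add: less_eq_ennreal.rep_eq)
      have b: "enn2ereal (\<integral>\<^sup>+\<omega>. ennreal (- \<beta> (Z \<omega>)) \<partial>P) \<le> enn2ereal (ennreal c)"
        using neg1 by (simp add: less_eq_ennreal.rep_eq)
      have c0: "c \<ge> 0" unfolding c_def by simp
      have "ereal (K * e) - ereal c \<le> enn2ereal (\<integral>\<^sup>+\<omega>. ennreal (\<beta> (Z \<omega>)) \<partial>P) - enn2ereal (\<integral>\<^sup>+\<omega>. ennreal (- \<beta> (Z \<omega>)) \<partial>P)"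
        using a b c0 Kpos e0 by (intro ereal_minus_mono) (auto simp: enn2ereal_ennreal)
      thus ?thesis unfolding eexp_def .
    qed
    have al: "\<alpha> P \<ge> ereal (K * e - c)" using A2 P ee by (metis ereal_minus(1) order_trans)
    have a0: "\<alpha> P \<ge> 0" using alpha_nonneg P by blast
    have intY: "integral\<^sup>L P Y = 1 / real n - real n * e"
    proof -
      have "integral\<^sup>L P Y = integral\<^sup>L P (\<lambda>_. 1 / real n) - integral\<^sup>L P (\<lambda>\<omega>. real n * h \<omega>)"
      proof -
        have Yh: "Y = (\<lambda>\<omega>. 1 / real n - real n * h \<omega>)" by (simp add: Y_def h_def)
        have fm: "finite_measure P" using ps by (simp add: prob_space_def)
        show ?thesis unfolding Yh using hI finite_measure.integrable_const[OF fm]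
          by (intro Bochner_Integration.integral_diff[where f="\<lambda>_. 1 / real n" and g="\<lambda>\<omega>. real n * h \<omega>"]) auto
      qed
      also have "\<dots> = 1 / real n - real n * e"
        using prob_space.prob_space[OF ps] by (simp add: e_def)
      finally show ?thesis .
    qed
    have key: "1 / real n - real n * e + a \<ge> 0" if "a \<ge> 0" "a \<ge> K * e - c" for a
    proof (cases "real n * e \<le> 1 / real n")
      case True then show ?thesis using that by linarith
    next
      case False
      have np: "real n > 0" using n1 by simp
      have "1 < real n * e * real n" using False np by (simp add: field_simps)
      hence ne: "(real n)^2 * e \<ge> 1" by (simp add: power2_eq_square algebra_simps)
      have c0: "c \<ge> 0" unfolding c_def by simp
      have "c * ((real n)^2 * e) \<ge> c * 1" using ne c0 by (intro mult_left_mono) auto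
      hence "K * e - c \<ge> real n * e" unfolding K_def using e0 by (simp add: algebra_simps)
      thus ?thesis using that np by (smt (verit) divide_pos_pos)
    qed
    show "ereal (integral\<^sup>L P Y) + \<alpha> P \<ge> 0"
    proof (cases "\<alpha> P")
      case (real a)
      then show ?thesis using key[of a] al a0 intY by auto
    next
      case PInf then show ?thesis by simp
    next
      case MInf then show ?thesis using a0 by simp
    qed
  qed
  obtain g where g: "g \<in> G" "\<forall>\<omega>\<in>\<Omega>. g \<omega> = 0" using G_zero by blast
  have W: "(\<lambda>_. 0) \<in> BBplus \<Omega>" unfolding BBplus_def BB_def by auto
  have "in_G_minus_A \<Omega> Z \<alpha> G (\<lambda>\<omega>. real n * max 0 (Z \<omega> - z) - 1 / real n)"
    unfolding in_G_minus_A_def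
    by (rule bexI[OF _ g(1)], rule bexI[OF _ YA], rule bexI[OF _ W]) (simp add: g(2) Y_def)
  thus "\<exists>z::real. z \<ge> 0 \<and> in_G_minus_A \<Omega> Z \<alpha> G (\<lambda>\<omega>. real n * max 0 (Z \<omega> - z) - 1 / real n)"
    using z1 by (intro exI[of _ z]) auto
qed

end
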